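(* Let $\mu,\nu$ be partitions of $n$ with $p(\nu)=p(\mu)+k$, where $k\ge2$. Then \[ \sum_{\substack{\mu_1,\dots,\mu_{k-1}\text{ partitions of }n:\\ p(\mu_i)=p(\mu)+i}} t^\mu_{\mu_1}t^{\mu_1}_{\mu_2}\cdots t^{\mu_{k-1}}_\nu=k!\,t^\mu_\nu. \]
   Context: Let $\mathbb H$ be the upper half plane and $\mathcal O(\mathbb H)$ its ring of holomorphic functions. Let $V=\mathbb C[a_{-1},a_{-2},\dots,b_0,b_{-1},\dots]$ be the vacuum module of the Heisenberg Lie algebra $[a_m,b_n]=\delta_{m,-n}C$ (with $a_m1=0$ for $m\ge0$, $b_n1=0$ for $n>0$, $C=1$), a vertex algebra with fields $a(z)=\sum a_nz^{-n-1}$, $b(z)=\sum b_nz^{-n}$. Let $\mathscr D^{ch}(\mathbb H)=V\otimes_{\mathbb C[b_0]}\mathcal O(\mathbb H)$ ($b_0\mapsto\tau$, $b=b_0$), with $Y(f,z)=\sum_{i\ge0}\frac{f^{(i)}(b)}{i!}(\sum_{n\ne0}b_nz^{-n})^i$ for $f\in\mathcal O(\mathbb H)$. For a partition $\mu=(\mu_{(1)}\ge\dots\ge\mu_{(d)}\ge1)$, $p(\mu)=d$, $|\mu|=\sum\mu_{(i)}$ and $b_{-\mu}=b_{-\mu_{(1)}}\cdots b_{-\mu_{(d)}}$. $SL(2,\mathbb R)$ acts on the right by vertex algebra automorphisms $\pi(g)$, integrating the zero modes of $E=-a_{-1}$, $F=a_{-1}b_0^2+2b_{-1}$, $H=-2a_{-1}b_0$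 via $\pi(e^x)=\exp(-x_{(0)})$; for $g=\begin{pmatrix}\alpha&\beta\\\gamma&\delta\end{pmatrix}$, $\pi(g)a_{-1}=a_{-1}(\gamma b+\delta)^2+2\gamma^2b_{-1}$ and $\pi(g)f(b)=f(\frac{\alpha b+\beta}{\gamma b+\delta})$. For each partition $\mu$ there are unique constants $t^\mu_\nu$ (for partitions $\nu$ with $|\nu|=|\mu|$, $p(\nu)\ge p(\mu)$), independent of $g$, such that for all $g\in SL(2,\mathbb R)$ \[ \pi(g)(b_{-\mu}\cdot1)=\sum_{\nu:\,p(\nu)\ge p(\mu)}t^\mu_\nu(-\gamma)^{p(\nu)-p(\mu)}\,b_{-\nu}\,(\gamma b+\delta)^{-p(\mu)-p(\nu)}. \] *)

theory Defs
  imports "HOL-Analysis.Analysis" "HOL-Library.Multiset"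
begin

text \<open>Partitions are multisets of positive naturals; p(mu) = size mu, |mu| = sum_mset mu.
  The monomial b_{-nu} (nu a partition) is indexed by the multiset nu.  An element of the
  commutative subalgebra O(H)[b_{-1},b_{-2},...] of the chiral de Rham complex, evaluated at a
  point tau of H (i.e. b_0 = tau), is represented by its coefficient function
  nat multiset => complex (coefficient of b_{-nu}).\<close>

definition is_partition :: "nat multiset \<Rightarrow> bool" where
  "is_partition mu \<longleftrightarrow> 0 \<notin># mu"

definition upper_half_plane :: "complex set" where
  "upper_half_plane = {tau. Im tau > 0}"

text \<open>Product of polynomials in the commuting variables b_{-1}, b_{-2}, ...\<close>
definition mmul :: "(nat multiset \<Rightarrow> complex) \<Rightarrow> (nat multiset \<Rightarrow> complex) \<Rightarrow> nat multiset \<Rightarrow> complex" where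
  "mmul F G nu = (\<Sum>a\<in>{a. a \<subseteq># nu}. F a * G (nu - a))"

definition mone :: "nat multiset \<Rightarrow> complex" where
  "mone nu = (if nu = {#} then 1 else 0)"

fun mpow :: "(nat multiset \<Rightarrow> complex) \<Rightarrow> nat \<Rightarrow> nat multiset \<Rightarrow> complex" where
  "mpow F 0 = mone"
| "mpow F (Suc i) = mmul F (mpow F i)"

text \<open>X = sum_{n>=1} b_{-n} z^n; the z-degree of a monomial b_{-nu} in a power of X is |nu|.\<close>
definition Xpoly :: "nat multiset \<Rightarrow> complex" where
  "Xpoly nu = (if (\<exists>n. n \<ge> 1 \<and> nu = {#n#}) then 1 else 0)"

definition moeb :: "real \<Rightarrow> real \<Rightarrow> real \<Rightarrow> real \<Rightarrow> complex \<Rightarrow> complex" where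
  "moeb \<alpha> \<beta> \<gamma> \<delta> w = (of_real \<alpha> * w + of_real \<beta>) / (of_real \<gamma> * w + of_real \<delta>)"

text \<open>Coefficient of z^m in Y(f,z)1 = sum_i f^(i)(b)/i! (sum_{n>0} b_{-n} z^n)^i, i.e. the element
  (1/m!) T^m f, at b = tau; for f = moeb g this is pi(g)(b_{-m} 1).\<close>
definition zcoef :: "(complex \<Rightarrow> complex) \<Rightarrow> complex \<Rightarrow> nat \<Rightarrow> nat multiset \<Rightarrow> complex" where
  "zcoef f tau m nu = (if sum_mset nu = m
      then (\<Sum>i\<le>m. (deriv ^^ i) f tau / of_nat (fact i) * mpow Xpoly i nu) else 0)"

text \<open>pi(g)(b_{-mu} 1) = product over the parts m of mu of pi(g)(b_{-m} 1), since pi(g) is a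
  vertex algebra automorphism and b_{-mu}1 is the (-1)-product of the b_{-m}1, evaluated at tau.\<close>
definition pi_bmu :: "real \<Rightarrow> real \<Rightarrow> real \<Rightarrow> real \<Rightarrow> complex \<Rightarrow> nat multiset \<Rightarrow> nat multiset \<Rightarrow> complex" where
  "pi_bmu \<alpha> \<beta> \<gamma> \<delta> tau mu =
     foldr (\<lambda>m acc. mmul (zcoef (moeb \<alpha> \<beta> \<gamma> \<delta>) tau m) acc) (sorted_list_of_multiset mu) mone"

text \<open>t represents the constants t^mu_nu: for all g in SL(2,R) and all tau in H, the coefficient
  of b_{-nu} in pi(g)(b_{-mu}1) equals t^mu_nu (-gamma)^(p(nu)-p(mu)) (gamma tau+delta)^(-p(mu)-p(nu))
  for the partitions nu with |nu| = |mu|, p(nu) >= p(mu), and all other coefficients vanish.\<close>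
definition t_admissible :: "nat multiset \<Rightarrow> nat multiset \<Rightarrow> bool" where
  "t_admissible mu nu \<longleftrightarrow> is_partition nu \<and> sum_mset nu = sum_mset mu \<and> size nu \<ge> size mu"

definition t_rep :: "nat multiset \<Rightarrow> (nat multiset \<Rightarrow> complex) \<Rightarrow> bool" where
  "t_rep mu t \<longleftrightarrow>
     (\<forall>nu. \<not> t_admissible mu nu \<longrightarrow> t nu = 0) \<and>
     (\<forall>\<alpha> \<beta> \<gamma> \<delta> tau. \<alpha> * \<delta> - \<beta> * \<gamma> = 1 \<longrightarrow> tau \<in> upper_half_plane \<longrightarrow>
        (\<forall>nu. pi_bmu \<alpha> \<beta> \<gamma> \<delta> tau mu nu =
           (if t_admissible mu nu
            then t nu * (- of_real \<gamma>) ^ (size nu - size mu)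
                 / (of_real \<gamma> * tau + of_real \<delta>) ^ (size mu + size nu)
            else 0)))"

definition tcoef :: "nat multiset \<Rightarrow> nat multiset \<Rightarrow> complex" where
  "tcoef mu = (THE t. t_rep mu t)"

end

theory Submission
  imports Defs
begin

lemma finite_submsets: "finite {a. a \<subseteq># (nu::'a multiset)}"
proof -
  have "{a. a \<subseteq># nu} \<subseteq> (\<Union>n\<le>size nu. multisets_of_size (set_mset nu) n)"
    by (auto simp: multisets_of_size_def size_mset_mono dest: set_mset_mono mset_subset_eqD)
  moreover have "finite (\<Union>n\<le>size nu. multisets_of_size (set_mset nu) n)" by auto
  ultimately show ?thesis by (rule finite_subset)
qed

lemma mmul_comm: "mmul F G = mmul G F"
proof
  fix nu
  show "mmul F G nu = mmul G F nu"
    unfolding mmul_def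
    apply (rule sum.reindex_bij_witness[where i="\<lambda>a. nu - a" and j="\<lambda>a. nu - a"])
    apply (auto simp: subset_mset.diff_diff_right mult.commute)
    done
qed

lemma mmul_mone: "mmul mone F = F"
proof
  fix nu
  have "mmul mone F nu = (\<Sum>a\<in>{a. a \<subseteq># nu}. if a = {#} then F nu else 0)"
    unfolding mmul_def mone_def by (rule sum.cong) auto
  also have "\<dots> = F nu" using finite_submsets[of nu] by (simp add: sum.delta)
  finally show "mmul mone F nu = F nu" .
qed

lemma mmul_mone_right: "mmul F mone = F"
  using mmul_mone mmul_comm by metis

lemma mmul_assoc: "mmul (mmul F G) H = mmul F (mmul G H)"
proof
  fix nu
  have "mmul (mmul F G) H nu = (\<Sum>d\<in>{a. a \<subseteq># nu}. \<Sum>b\<in>{b. b \<subseteq># d}. F b * G (d - b) * H (nu - d))"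
    unfolding mmul_def by (simp add: sum_distrib_right)
  also have "\<dots> = (\<Sum>(d,b)\<in>(SIGMA d:{a. a \<subseteq># nu}. {b. b \<subseteq># d}). F b * G (d - b) * H (nu - d))"
    by (rule sum.Sigma) (auto simp: finite_submsets)
  also have "\<dots> = (\<Sum>(b,c)\<in>(SIGMA b:{a. a \<subseteq># nu}. {c. c \<subseteq># nu - b}). F b * G c * H (nu - b - c))"
    apply (rule sum.reindex_bij_witness[where i="\<lambda>(b,c). (b + c, b)" and j="\<lambda>(d,b). (b, d - b)"])
    apply (auto simp: subset_mset.le_diff_conv2 subset_mset.add_diff_inverse diff_diff_add add.commute)
    done
  also have "\<dots> = (\<Sum>b\<in>{a. a \<subseteq># nu}. \<Sum>c\<in>{c. c \<subseteq># nu - b}. F b * G c * H (nu - b - c))"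
    by (rule sum.Sigma[symmetric]) (auto simp: finite_submsets)
  also have "\<dots> = mmul F (mmul G H) nu"
    unfolding mmul_def by (simp add: sum_distrib_left mult.assoc)
  finally show "mmul (mmul F G) H nu = mmul F (mmul G H) nu" .
qed

lemma mmul_add_left: "mmul (\<lambda>x. F x + G x) H nu = mmul F H nu + mmul G H nu"
  unfolding mmul_def by (simp add: sum.distrib distrib_right)

lemma mmul_scale_left: "mmul (\<lambda>x. c * F x) H nu = c * mmul F H nu"
  unfolding mmul_def by (simp add: sum_distrib_left mult.assoc)

lemma mmul_zero_left: "mmul (\<lambda>x. 0) H nu = 0"
  unfolding mmul_def by simp

lemma mmul_sum_mset_left: "mmul (\<lambda>x. \<Sum>m\<in>#M. F m x) H nu = (\<Sum>m\<in>#M. mmul (F m) H nu)"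
proof (induction M)
  case empty then show ?case by (simp add: mmul_zero_left)
next
  case (add x M)
  have "mmul (\<lambda>y. \<Sum>m\<in>#add_mset x M. F m y) H nu = mmul (\<lambda>y. F x y + (\<Sum>m\<in>#M. F m y)) H nu"
    by simp
  also have "\<dots> = mmul (F x) H nu + mmul (\<lambda>y. \<Sum>m\<in>#M. F m y) H nu"
    by (rule mmul_add_left)
  finally show ?case using add by simp
qed

lemma mmul_sum_left: "mmul (\<lambda>x. \<Sum>m\<in>A. F m x) H nu = (\<Sum>m\<in>A. mmul (F m) H nu)"
  unfolding mmul_def by (simp add: sum_distrib_right sum.swap[of _ A])

lemma mmul_nonzero:
  assumes "mmul F G nu \<noteq> 0"
  shows "\<exists>b. b \<subseteq># nu \<and> F b \<noteq> 0 \<and> G (nu - b) \<noteq> 0"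
proof (rule ccontr)
  assume "\<not> ?thesis"
  then have "mmul F G nu = 0" unfolding mmul_def by (intro sum.neutral) auto
  with assms show False by simp
qed

lemma mpow_add: "mpow F (i + j) = mmul (mpow F i) (mpow F j)"
  by (induction i) (simp_all add: mmul_mone mmul_assoc)

lemma Xpoly_nonzero: "Xpoly b \<noteq> 0 \<Longrightarrow> \<exists>n. n \<ge> 1 \<and> b = {#n#}"
  unfolding Xpoly_def by (auto split: if_splits)

lemma mpowX_supp: "mpow Xpoly i a \<noteq> 0 \<Longrightarrow> size a = i \<and> 0 \<notin># a"
proof (induction i arbitrary: a)
  case 0 then show ?case by (auto simp: mone_def split: if_splits)
next
  case (Suc i)
  from Suc.prems obtain b where b: "b \<subseteq># a" "Xpoly b \<noteq> 0" "mpow Xpoly i (a - b) \<noteq> 0"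
    using mmul_nonzero by fastforce
  from Xpoly_nonzero[OF b(2)] obtain n where n: "n \<ge> 1" "b = {#n#}" by blast
  from Suc.IH[OF b(3)] have ih: "size (a - b) = i" "0 \<notin># a - b" by auto
  have a: "a = b + (a - b)" using b(1) by (simp add: subset_mset.add_diff_inverse)
  show ?case
  proof
    show "size a = Suc i" using a ih n by (metis add_mset_add_single size_add_mset add.commute size_union) 
    show "0 \<notin># a" using a ih n by (metis union_iff set_mset_single singletonD not_one_le_zero)
  qed
qed

definition Nop :: "(nat multiset \<Rightarrow> complex) \<Rightarrow> nat multiset \<Rightarrow> complex" where
  "Nop F = (\<lambda>a. of_nat (size a) * F a)"

lemma Nop_mmul: "Nop (mmul F G) nu = mmul (Nop F) G nu + mmul F (Nop G) nu"
proof -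
  have "Nop (mmul F G) nu = (\<Sum>a\<in>{a. a \<subseteq># nu}. of_nat (size nu) * (F a * G (nu - a)))"
    unfolding Nop_def mmul_def by (simp add: sum_distrib_left)
  also have "\<dots> = (\<Sum>a\<in>{a. a \<subseteq># nu}. of_nat (size a) * F a * G (nu - a) + F a * (of_nat (size (nu - a)) * G (nu - a)))"
  proof (rule sum.cong)
    fix a assume "a \<in> {a. a \<subseteq># nu}"
    then have "size nu = size a + size (nu - a)" by (simp add: size_Diff_submset size_mset_mono)
    then show "of_nat (size nu) * (F a * G (nu - a)) = of_nat (size a) * F a * G (nu - a) + F a * (of_nat (size (nu - a)) * G (nu - a))"
      by (simp add: algebra_simps)
  qed simp
  also have "\<dots> = mmul (Nop F) G nu + mmul F (Nop G) nu"
    unfolding Nop_def mmul_def by (simp add: sum.distrib)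
  finally show ?thesis .
qed

definition mdelta :: "nat multiset \<Rightarrow> nat multiset \<Rightarrow> complex" where
  "mdelta a = (\<lambda>x. if x = a then 1 else 0)"

lemma mmul_mdelta: "mmul (mdelta a) (mdelta b) = mdelta (a + b)"
proof
  fix nu
  have "mmul (mdelta a) (mdelta b) nu = (\<Sum>c\<in>{c. c \<subseteq># nu}. if c = a then (if nu - a = b then 1 else 0) else 0)"
    unfolding mmul_def mdelta_def by (rule sum.cong) auto
  also have "\<dots> = (if a \<subseteq># nu \<and> nu - a = b then 1 else 0)"
    using finite_submsets[of nu] by (simp add: sum.delta)
  also have "\<dots> = mdelta (a + b) nu"
    unfolding mdelta_def by (auto simp: subset_mset.add_diff_inverse)
  finally show "mmul (mdelta a) (mdelta b) nu = mdelta (a + b) nu" .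
qed

definition W :: "nat \<Rightarrow> nat multiset \<Rightarrow> complex" where
  "W m a = (if sum_mset a = m then mpow Xpoly (size a) a else 0)"

lemma W_supp: "W m a \<noteq> 0 \<Longrightarrow> sum_mset a = m \<and> 0 \<notin># a \<and> (m \<ge> 1 \<longrightarrow> size a \<ge> 1)"
  unfolding W_def by (auto split: if_splits dest: mpowX_supp) (metis Suc_leI neq0_conv size_eq_0_iff_empty sum_mset.empty)

definition T :: "nat multiset \<Rightarrow> nat multiset \<Rightarrow> complex" where
  "T mu = foldr (\<lambda>m acc. mmul (W m) acc) (sorted_list_of_multiset mu) mone"

lemma foldr_insort_comm:
  assumes "\<And>a b z. f a (f b z) = f b (f a z)"
  shows "foldr f (insort x xs) z = f x (foldr f xs z)"
  by (induction xs) (auto simp: assms)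

lemma T_empty: "T {#} = mone"
  unfolding T_def by simp

lemma T_add: "T (add_mset m rho) = mmul (W m) (T rho)"
proof -
  have "\<And>a b z. mmul (W a) (mmul (W b) z) = mmul (W b) (mmul (W a) z)"
    by (metis mmul_assoc mmul_comm)
  then show ?thesis unfolding T_def
    by (simp add: foldr_insort_comm[where f="\<lambda>m acc. mmul (W m) acc"])
qed

lemma T_supp:
  assumes "is_partition mu" "T mu nu \<noteq> 0"
  shows "is_partition nu \<and> sum_mset nu = sum_mset mu \<and> size nu \<ge> size mu"
  using assms
proof (induction mu arbitrary: nu)
  case empty then show ?case by (auto simp: T_empty mone_def is_partition_def split: if_splits)
next
  case (add m rho)
  have m: "m \<ge> 1" and rho: "is_partition rho" using add.prems(1) by (auto simp: is_partition_def)
  from add.prems(2) obtain b where b: "b \<subseteq># nu" "W m b \<noteq> 0" "T rho (nu - b) \<noteq> 0"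
    unfolding T_add using mmul_nonzero by fastforce
  from W_supp[OF b(2)] m have wb: "sum_mset b = m" "0 \<notin># b" "size b \<ge> 1" by auto
  from add.IH[OF rho b(3)] have ih: "is_partition (nu - b)" "sum_mset (nu - b) = sum_mset rho" "size (nu - b) \<ge> size rho" by auto
  have nu: "nu = b + (nu - b)" using b(1) by (simp add: subset_mset.add_diff_inverse)
  show ?case
  proof (intro conjI)
    show "is_partition nu" using ih(1) wb(2) nu unfolding is_partition_def by (metis union_iff)
    show "sum_mset nu = sum_mset (add_mset m rho)" using nu ih(2) wb(1) by (metis sum_mset.add_mset sum_mset.union)
    show "size (add_mset m rho) \<le> size nu" using nu ih(3) wb(3) by (metis size_union size_add_mset add_mono Suc_eq_plus1 add.commute)
  qed
qed

lemma sum_mset_nz: "0 \<notin># (b::nat multiset) \<Longrightarrow> (sum_mset b = 0 \<longleftrightarrow> b = {#})"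
  by (induction b) auto

lemma arith_aux: "(x::nat) = y + z \<Longrightarrow> (y \<in> {1..<m} \<and> z = m - y) \<longleftrightarrow> (x = m \<and> y \<noteq> 0 \<and> z \<noteq> 0)"
  by auto

lemma arith_aux2: "(x::nat) = y + z \<Longrightarrow> (y \<in> {1..<x}) \<longleftrightarrow> (y \<noteq> 0 \<and> z \<noteq> 0)"
  by auto

lemma key1:
  assumes m: "m \<ge> 1"
  shows "(\<Sum>a\<in>{1..<m}. mmul (W a) (W (m - a)) al) = (of_nat (size al) - 1) * W m al"
proof -
  define Z where "Z b = mpow Xpoly (size b) b" for b
  have Wd: "W a b = (if sum_mset b = a then Z b else 0)" for a b unfolding W_def Z_def by simp
  have A: "(\<Sum>a\<in>{1..<m}. W a b * W (m - a) (al - b)) =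
      (if sum_mset al = m \<and> b \<noteq> {#} \<and> al - b \<noteq> {#} then Z b * Z (al - b) else 0)"
    if b: "b \<subseteq># al" for b
  proof -
    have sa: "sum_mset al = sum_mset b + sum_mset (al - b)" using b
      by (metis subset_mset.add_diff_inverse sum_mset.union)
    have "(\<Sum>a\<in>{1..<m}. W a b * W (m - a) (al - b)) =
        (\<Sum>a\<in>{1..<m}. if sum_mset b = a then (if sum_mset (al - b) = m - sum_mset b then Z b * Z (al - b) else 0) else 0)"
      unfolding Wd by (rule sum.cong) auto
    also have "\<dots> = (if sum_mset b \<in> {1..<m} \<and> sum_mset (al - b) = m - sum_mset b then Z b * Z (al - b) else 0)"
      by (simp add: sum.delta)
    also have "\<dots> = (if sum_mset al = m \<and> b \<noteq> {#} \<and> al - b \<noteq> {#} then Z b * Z (al - b) else 0)"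
    proof (cases "Z b * Z (al - b) = 0")
      case True then show ?thesis by simp
    next
      case False
      then have "0 \<notin># b" "0 \<notin># al - b" unfolding Z_def using mpowX_supp by auto
      then have "(sum_mset b = 0 \<longleftrightarrow> b = {#})" "(sum_mset (al - b) = 0 \<longleftrightarrow> al - b = {#})"
        using sum_mset_nz by auto
      moreover have "(sum_mset b \<in> {1..<m} \<and> sum_mset (al - b) = m - sum_mset b) \<longleftrightarrow>
          (sum_mset al = m \<and> sum_mset b \<noteq> 0 \<and> sum_mset (al - b) \<noteq> 0)"
        using arith_aux[OF sa] .
      ultimately show ?thesis by (simp only:)
    qed
    finally show ?thesis .
  qed
  have "(\<Sum>a\<in>{1..<m}. mmul (W a) (W (m - a)) al) =
      (\<Sum>b\<in>{b. b \<subseteq># al}. \<Sum>a\<in>{1..<m}. W a b * W (m - a) (al - b))"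
    unfolding mmul_def by (rule sum.swap)
  also have "\<dots> = (\<Sum>b\<in>{b. b \<subseteq># al}. if sum_mset al = m \<and> b \<noteq> {#} \<and> al - b \<noteq> {#} then Z b * Z (al - b) else 0)"
    by (rule sum.cong[OF refl], rule A, simp)
  also have "\<dots> = (of_nat (size al) - 1) * W m al"
  proof (cases "sum_mset al = m")
    case False then show ?thesis by (simp add: Wd)
  next
    case True
    define p where "p = size al"
    have "al \<noteq> {#}" using True m by auto
    then have p1: "p \<ge> 1" unfolding p_def by (simp add: Suc_leI nonempty_has_size)
    have B: "(\<Sum>i\<in>{1..<p}. mpow Xpoly i b * mpow Xpoly (p - i) (al - b)) =
        (if b \<noteq> {#} \<and> al - b \<noteq> {#} then Z b * Z (al - b) else 0)" if b: "b \<subseteq># al" for b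
    proof -
      have sz: "size al = size b + size (al - b)" using b by (simp add: size_Diff_submset size_mset_mono)
      have "(\<Sum>i\<in>{1..<p}. mpow Xpoly i b * mpow Xpoly (p - i) (al - b)) =
          (\<Sum>i\<in>{1..<p}. if size b = i then Z b * Z (al - b) else 0)"
      proof (rule sum.cong)
        fix i assume "i \<in> {1..<p}"
        show "mpow Xpoly i b * mpow Xpoly (p - i) (al - b) = (if size b = i then Z b * Z (al - b) else 0)"
        proof (cases "size b = i")
          case True
          then have "p - i = size (al - b)" using sz unfolding p_def by linarith
          then show ?thesis unfolding Z_def using True by simp
        next
          case False then have "mpow Xpoly i b = 0" using mpowX_supp by blast
          then show ?thesis using False by simp
        qed
      qed simp
      also have "\<dots> = (if size b \<in> {1..<p} then Z b * Z (al - b) else 0)"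
        by (simp add: sum.delta')
      also have "\<dots> = (if b \<noteq> {#} \<and> al - b \<noteq> {#} then Z b * Z (al - b) else 0)"
      proof -
        have "size b \<in> {1..<p} \<longleftrightarrow> b \<noteq> {#} \<and> al - b \<noteq> {#}"
          using arith_aux2[OF sz] unfolding p_def by simp
        then show ?thesis by (simp only:)
      qed
      finally show ?thesis .
    qed
    have "(of_nat (size al) - 1) * W m al = (\<Sum>i\<in>{1..<p}. mpow Xpoly p al)"
    proof -
      have "(of_nat (size al) - 1 :: complex) = of_nat (p - 1)" using p1 unfolding p_def by (simp add: of_nat_diff)
      moreover have "W m al = mpow Xpoly p al" using True unfolding W_def p_def by simp
      ultimately show ?thesis by simp
    qed
    also have "\<dots> = (\<Sum>i\<in>{1..<p}. mmul (mpow Xpoly i) (mpow Xpoly (p - i)) al)"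
      by (rule sum.cong) (auto simp: mpow_add[symmetric])
    also have "\<dots> = (\<Sum>b\<in>{b. b \<subseteq># al}. \<Sum>i\<in>{1..<p}. mpow Xpoly i b * mpow Xpoly (p - i) (al - b))"
      unfolding mmul_def by (rule sum.swap)
    also have "\<dots> = (\<Sum>b\<in>{b. b \<subseteq># al}. if b \<noteq> {#} \<and> al - b \<noteq> {#} then Z b * Z (al - b) else 0)"
      by (rule sum.cong[OF refl], rule B, simp)
    finally have E: "(of_nat (size al) - 1) * W m al = (\<Sum>b\<in>{b. b \<subseteq># al}. if b \<noteq> {#} \<and> al - b \<noteq> {#} then Z b * Z (al - b) else 0)" .
    show ?thesis unfolding E using True by simp
  qed
  finally show ?thesis .
qed

lemma mmul_cong: "(\<And>b. b \<subseteq># nu \<Longrightarrow> F b * G (nu - b) = F' b * G' (nu - b)) \<Longrightarrow> mmul F G nu = mmul F' G' nu"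
  unfolding mmul_def by (rule sum.cong) auto

lemma mmul_cong2: "(\<And>b. b \<subseteq># nu \<Longrightarrow> F b * G (nu - b) = F1 b * G1 (nu - b) + F2 b * G2 (nu - b)) \<Longrightarrow>
   mmul F G nu = mmul F1 G1 nu + mmul F2 G2 nu"
  unfolding mmul_def by (simp add: sum.distrib[symmetric])

lemma mmul_mdelta_left: "mmul (mdelta c) F nu = (if c \<subseteq># nu then F (nu - c) else 0)"
proof -
  have "mmul (mdelta c) F nu = (\<Sum>b\<in>{b. b \<subseteq># nu}. if b = c then F (nu - c) else 0)"
    unfolding mmul_def mdelta_def by (rule sum.cong) auto
  also have "\<dots> = (if c \<subseteq># nu then F (nu - c) else 0)"
    using finite_submsets[of nu] by (simp add: sum.delta)
  finally show ?thesis .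
qed

lemma mdelta_shift: "(if c \<subseteq># nu then mdelta X (nu - c) else 0) = mdelta (c + X) nu"
  unfolding mdelta_def by (auto simp: subset_mset.add_diff_inverse)

lemma W1: "m \<ge> 1 \<Longrightarrow> size b \<le> 1 \<Longrightarrow> W m b = mdelta {#m#} b"
proof -
  assume m: "m \<ge> 1" and s: "size b \<le> 1"
  show ?thesis
  proof (cases "size b = 0")
    case True then show ?thesis using m by (simp add: W_def mdelta_def)
  next
    case False
    with s have "size b = 1" by linarith
    then obtain x where b: "b = {#x#}" by (metis size_1_singleton_mset)
    have "mpow Xpoly 1 {#x#} = Xpoly {#x#}" by (simp add: mmul_mone_right)
    then show ?thesis using m unfolding b W_def mdelta_def Xpoly_def by auto
  qed
qed

lemma size_sub: "b \<subseteq># nu \<Longrightarrow> size (nu - b) = size nu - size b \<and> size b \<le> size nu"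
  by (simp add: size_Diff_submset size_mset_mono)

lemma T_low: "is_partition mu \<Longrightarrow> size nu < size mu \<Longrightarrow> T mu nu = 0"
  using T_supp by fastforce

lemma T_diag: "is_partition mu \<Longrightarrow> size nu = size mu \<Longrightarrow> T mu nu = mdelta mu nu"
proof (induction mu arbitrary: nu)
  case empty then show ?case by (simp add: T_empty mone_def mdelta_def)
next
  case (add m rho)
  have m: "m \<ge> 1" and rho: "is_partition rho" using add.prems(1) by (auto simp: is_partition_def)
  have "T (add_mset m rho) nu = mmul (mdelta {#m#}) (T rho) nu"
    unfolding T_add
  proof (rule mmul_cong)
    fix b assume b: "b \<subseteq># nu"
    show "W m b * T rho (nu - b) = mdelta {#m#} b * T rho (nu - b)"
    proof (cases "size b \<le> 1")
      case True then show ?thesis using W1[OF m] by simp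
    next
      case False
      then have "size (nu - b) < size rho" using size_sub[OF b] add.prems(2) by (simp del: size_eq_0_iff_empty) arith
      then show ?thesis using T_low[OF rho] by simp
    qed
  qed
  also have "\<dots> = (if {#m#} \<subseteq># nu then mdelta rho (nu - {#m#}) else 0)"
    unfolding mmul_mdelta_left
    using add.IH[OF rho] add.prems(2) by (auto simp: size_Diff_submset)
  also have "\<dots> = mdelta (add_mset m rho) nu" unfolding mdelta_def by (auto simp: insert_DiffM)
  finally show ?case .
qed

lemma W2: "a \<ge> 1 \<Longrightarrow> c \<ge> 1 \<Longrightarrow> size nu = 2 \<Longrightarrow> mmul (W a) (W c) nu = mdelta {#a, c#} nu"
proof -
  assume a: "a \<ge> 1" and c: "c \<ge> 1" and s: "size nu = 2"
  have "mmul (W a) (W c) nu = mmul (mdelta {#a#}) (mdelta {#c#}) nu"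
  proof (rule mmul_cong)
    fix b assume b: "b \<subseteq># nu"
    note sb = size_sub[OF b]
    show "W a b * W c (nu - b) = mdelta {#a#} b * mdelta {#c#} (nu - b)"
    proof (cases "size b \<le> 1")
      case True
      moreover have "size (nu - b) \<le> 1 \<or> size b = 0" using sb s True by (simp del: size_eq_0_iff_empty) arith
      ultimately show ?thesis using W1[OF a] W1[OF c] by (auto simp: mdelta_def)
    next
      case False
      then have "size (nu - b) \<le> 1" using sb s by auto
      moreover have "nu - b = {#}" using sb s False by auto
      ultimately show ?thesis using W1[OF c] by (simp add: mdelta_def)
    qed
  qed
  then show ?thesis by (simp add: mmul_mdelta add_mset_commute)
qed

lemma key2:
  assumes m: "m \<ge> 1" and s: "size nu = 2"
  shows "W m nu = (\<Sum>a\<in>{1..<m}. mdelta {#a, m - a#} nu)"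
proof -
  have "W m nu = (of_nat (size nu) - 1) * W m nu" using s by simp
  also have "\<dots> = (\<Sum>a\<in>{1..<m}. mmul (W a) (W (m - a)) nu)" using key1[OF m] by simp
  also have "\<dots> = (\<Sum>a\<in>{1..<m}. mdelta {#a, m - a#} nu)"
    by (rule sum.cong) (auto simp: W2 s)
  finally show ?thesis .
qed

definition tgt :: "nat multiset \<Rightarrow> nat \<Rightarrow> nat \<Rightarrow> nat multiset" where
  "tgt mu m a = add_mset a (add_mset (m - a) (mu - {#m#}))"

lemma mdelta_rm: "(if m \<in># nu then mdelta X (nu - {#m#}) else 0) = mdelta (add_mset m X) nu"
  unfolding mdelta_def by (auto simp: insert_DiffM)

lemma tgt_add: "m' \<in># rho \<Longrightarrow> tgt (add_mset m rho) m' a = add_mset m (tgt rho m' a)"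
proof -
  assume "m' \<in># rho"
  then obtain R where r: "rho = add_mset m' R" by (metis multi_member_split)
  show ?thesis unfolding r tgt_def by (simp add: add_mset_commute[of m m'] add_mset_commute[of m])
qed

lemma tgt_self: "tgt (add_mset m rho) m a = rho + {#a, m - a#}"
  unfolding tgt_def by simp

lemma onestep:
  "is_partition mu \<Longrightarrow> size nu = Suc (size mu) \<Longrightarrow>
     T mu nu = (\<Sum>m\<in>#mu. \<Sum>a\<in>{1..<m}. mdelta (tgt mu m a) nu)"
proof (induction mu arbitrary: nu)
  case empty then show ?case by (auto simp: T_empty mone_def)
next
  case (add m rho)
  have m: "m \<ge> 1" and rho: "is_partition rho" using add.prems(1) by (auto simp: is_partition_def)
  have sn: "size nu = Suc (Suc (size rho))" using add.prems(2) by simp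
  have "T (add_mset m rho) nu = mmul (mdelta {#m#}) (T rho) nu + mmul (W m) (mdelta rho) nu"
    unfolding T_add
  proof (rule mmul_cong2)
    fix b assume b: "b \<subseteq># nu"
    note sb = size_sub[OF b]
    show "W m b * T rho (nu - b) = mdelta {#m#} b * T rho (nu - b) + W m b * mdelta rho (nu - b)"
    proof (cases "size b \<le> 1")
      case True
      have "W m b * mdelta rho (nu - b) = 0"
      proof (cases "size b = 0")
        case True then show ?thesis using m by (simp add: W_def)
      next
        case False
        then have "size (nu - b) \<noteq> size rho" using sb sn \<open>size b \<le> 1\<close> by (simp del: size_eq_0_iff_empty)
        then show ?thesis by (auto simp: mdelta_def)
      qed
      then show ?thesis using W1[OF m True] by simp
    next
      case False
      then have "mdelta {#m#} b = 0" by (auto simp: mdelta_def)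
      moreover have "T rho (nu - b) = mdelta rho (nu - b)"
      proof (cases "size (nu - b) = size rho")
        case True then show ?thesis using T_diag[OF rho] by simp
      next
        case False
        then have "size (nu - b) < size rho" using sb sn \<open>\<not> size b \<le> 1\<close> by (simp del: size_eq_0_iff_empty)
        then show ?thesis using T_low[OF rho] by (auto simp: mdelta_def)
      qed
      ultimately show ?thesis by simp
    qed
  qed
  also have "mmul (mdelta {#m#}) (T rho) nu = (\<Sum>m'\<in>#rho. \<Sum>a\<in>{1..<m'}. mdelta (tgt (add_mset m rho) m' a) nu)"
  proof (cases "m \<in># nu")
    case True
    then have "mmul (mdelta {#m#}) (T rho) nu = T rho (nu - {#m#})" by (simp add: mmul_mdelta_left)
    also have "\<dots> = (\<Sum>m'\<in>#rho. \<Sum>a\<in>{1..<m'}. mdelta (tgt rho m' a) (nu - {#m#}))"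
      using add.IH[OF rho] True sn by (simp add: size_Diff_submset)
    also have "\<dots> = (\<Sum>m'\<in>#rho. \<Sum>a\<in>{1..<m'}. mdelta (tgt (add_mset m rho) m' a) nu)"
    proof -
      have "image_mset (\<lambda>m'. \<Sum>a\<in>{1..<m'}. mdelta (tgt rho m' a) (nu - {#m#})) rho =
            image_mset (\<lambda>m'. \<Sum>a\<in>{1..<m'}. mdelta (tgt (add_mset m rho) m' a) nu) rho"
      proof (rule image_mset_cong)
        fix m' assume "m' \<in># rho"
        then show "(\<Sum>a\<in>{1..<m'}. mdelta (tgt rho m' a) (nu - {#m#})) = (\<Sum>a\<in>{1..<m'}. mdelta (tgt (add_mset m rho) m' a) nu)"
          using mdelta_rm[of m nu] True by (simp add: tgt_add)
      qed
      then show ?thesis by simp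
    qed
    finally show ?thesis .
  next
    case False
    then have "mmul (mdelta {#m#}) (T rho) nu = 0" by (simp add: mmul_mdelta_left)
    moreover have "(\<Sum>m'\<in>#rho. \<Sum>a\<in>{1..<m'}. mdelta (tgt (add_mset m rho) m' a) nu) = 0"
    proof -
      have "image_mset (\<lambda>m'. \<Sum>a\<in>{1..<m'}. mdelta (tgt (add_mset m rho) m' a) nu) rho = image_mset (\<lambda>m'. 0) rho"
      proof (rule image_mset_cong)
        fix m' assume "m' \<in># rho"
        then show "(\<Sum>a\<in>{1..<m'}. mdelta (tgt (add_mset m rho) m' a) nu) = 0"
          using False by (intro sum.neutral ballI) (auto simp: tgt_add mdelta_def)
      qed
      then show ?thesis by simp
    qed
    ultimately show ?thesis by simp
  qed
  also have "mmul (W m) (mdelta rho) nu = (\<Sum>a\<in>{1..<m}. mdelta (tgt (add_mset m rho) m a) nu)"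
  proof (cases "rho \<subseteq># nu")
    case True
    then have "mmul (W m) (mdelta rho) nu = W m (nu - rho)" by (simp add: mmul_comm[of "W m"] mmul_mdelta_left)
    also have "\<dots> = (\<Sum>a\<in>{1..<m}. mdelta {#a, m - a#} (nu - rho))"
      using key2[OF m] sn True by (simp add: size_Diff_submset)
    also have "\<dots> = (\<Sum>a\<in>{1..<m}. mdelta (tgt (add_mset m rho) m a) nu)"
      using mdelta_shift[of rho nu] True by (simp add: tgt_self)
    finally show ?thesis .
  next
    case False
    have "mdelta (tgt (add_mset m rho) m a) nu = 0" for a
      unfolding tgt_self using mdelta_shift[of rho nu "{#a, m - a#}", symmetric] False by (simp only: False if_False)
    then show ?thesis using False
      by (simp add: mmul_comm[of "W m"] mmul_mdelta_left)
  qed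
  finally show ?case by (simp add: add.commute)
qed

lemma mmul_sum_mset_right: "mmul F (\<lambda>x. \<Sum>m\<in>#M. H m x) nu = (\<Sum>m\<in>#M. mmul F (H m) nu)"
  by (simp add: mmul_comm[of F] mmul_sum_mset_left)

lemma combine:
  "mmul (\<lambda>x. (of_nat (size x) - 1) * F x) G nu + mmul F (\<lambda>x. (of_nat (size x) - c) * G x) nu
   = (of_nat (size nu) - 1 - c) * mmul F G nu"
proof -
  have "mmul (\<lambda>x. (of_nat (size x) - 1) * F x) G nu + mmul F (\<lambda>x. (of_nat (size x) - c) * G x) nu
      = (\<Sum>b\<in>{b. b \<subseteq># nu}. (of_nat (size b) - 1) * F b * G (nu - b) + F b * ((of_nat (size (nu - b)) - c) * G (nu - b)))"
    unfolding mmul_def by (simp add: sum.distrib)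
  also have "\<dots> = (\<Sum>b\<in>{b. b \<subseteq># nu}. (of_nat (size nu) - 1 - c) * (F b * G (nu - b)))"
  proof (rule sum.cong)
    fix b assume "b \<in> {b. b \<subseteq># nu}"
    then have "size nu = size b + size (nu - b)" using size_sub[of b nu] by simp
    then have "(of_nat (size nu) :: complex) = of_nat (size b) + of_nat (size (nu - b))" by simp
    then show "(of_nat (size b) - 1) * F b * G (nu - b) + F b * ((of_nat (size (nu - b)) - c) * G (nu - b))
        = (of_nat (size nu) - 1 - c) * (F b * G (nu - b))"
      by (simp add: algebra_simps)
  qed simp
  also have "\<dots> = (of_nat (size nu) - 1 - c) * mmul F G nu"
    unfolding mmul_def by (simp add: sum_distrib_left)
  finally show ?thesis .
qed

definition Gop :: "nat \<Rightarrow> nat multiset \<Rightarrow> complex" where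
  "Gop m = (\<lambda>x. (of_nat (size x) - 1) * W m x)"

lemma Gsum:
  "is_partition mu \<Longrightarrow>
   (\<Sum>m\<in>#mu. mmul (Gop m) (T (mu - {#m#})) nu) = (of_nat (size nu) - of_nat (size mu)) * T mu nu"
proof (induction mu arbitrary: nu)
  case empty then show ?case by (simp add: T_empty mone_def)
next
  case (add m0 rho)
  have rho: "is_partition rho" using add.prems(1) by (auto simp: is_partition_def)
  have "(\<Sum>m\<in>#rho. mmul (Gop m) (T (add_mset m0 rho - {#m#})) nu)
      = (\<Sum>m\<in>#rho. mmul (W m0) (mmul (Gop m) (T (rho - {#m#}))) nu)"
  proof -
    have "image_mset (\<lambda>m. mmul (Gop m) (T (add_mset m0 rho - {#m#})) nu) rho
        = image_mset (\<lambda>m. mmul (W m0) (mmul (Gop m) (T (rho - {#m#}))) nu) rho"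
    proof (rule image_mset_cong)
      fix m assume "m \<in># rho"
      then have "add_mset m0 rho - {#m#} = add_mset m0 (rho - {#m#})"
        by (metis insert_DiffM add_mset_commute add_mset_remove_trivial)
      then show "mmul (Gop m) (T (add_mset m0 rho - {#m#})) nu = mmul (W m0) (mmul (Gop m) (T (rho - {#m#}))) nu"
        by (simp add: T_add) (metis mmul_assoc mmul_comm)
    qed
    then show ?thesis by simp
  qed
  also have "\<dots> = mmul (W m0) (\<lambda>x. \<Sum>m\<in>#rho. mmul (Gop m) (T (rho - {#m#})) x) nu"
    by (simp add: mmul_sum_mset_right)
  also have "\<dots> = mmul (W m0) (\<lambda>x. (of_nat (size x) - of_nat (size rho)) * T rho x) nu"
    using add.IH[OF rho] by simp
  finally have E: "(\<Sum>m\<in>#rho. mmul (Gop m) (T (add_mset m0 rho - {#m#})) nu) = mmul (W m0) (\<lambda>x. (of_nat (size x) - of_nat (size rho)) * T rho x) nu" .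
  have "(\<Sum>m\<in>#add_mset m0 rho. mmul (Gop m) (T (add_mset m0 rho - {#m#})) nu)
      = mmul (Gop m0) (T rho) nu + mmul (W m0) (\<lambda>x. (of_nat (size x) - of_nat (size rho)) * T rho x) nu"
    using E by simp
  also have "\<dots> = (of_nat (size nu) - 1 - of_nat (size rho)) * mmul (W m0) (T rho) nu"
    unfolding Gop_def by (rule combine)
  also have "\<dots> = (of_nat (size nu) - of_nat (size (add_mset m0 rho))) * T (add_mset m0 rho) nu"
    by (simp add: T_add algebra_simps)
  finally show ?case .
qed

lemma tgt_T: "m \<in># mu \<Longrightarrow> T (tgt mu m a) = mmul (mmul (W a) (W (m - a))) (T (mu - {#m#}))"
  unfolding tgt_def by (simp add: T_add mmul_assoc)

lemma Nsum:
  assumes "is_partition mu"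
  shows "(\<Sum>m\<in>#mu. \<Sum>a\<in>{1..<m}. T (tgt mu m a) nu) = (of_nat (size nu) - of_nat (size mu)) * T mu nu"
proof -
  have "image_mset (\<lambda>m. \<Sum>a\<in>{1..<m}. T (tgt mu m a) nu) mu = image_mset (\<lambda>m. mmul (Gop m) (T (mu - {#m#})) nu) mu"
  proof (rule image_mset_cong)
    fix m assume mm: "m \<in># mu"
    then have m1: "m \<ge> 1" using assms unfolding is_partition_def by (cases m) auto
    have "(\<Sum>a\<in>{1..<m}. T (tgt mu m a) nu) = mmul (\<lambda>x. \<Sum>a\<in>{1..<m}. mmul (W a) (W (m - a)) x) (T (mu - {#m#})) nu"
      by (simp add: tgt_T[OF mm] mmul_sum_left)
    also have "\<dots> = mmul (Gop m) (T (mu - {#m#})) nu"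
      unfolding Gop_def using key1[OF m1] by simp
    finally show "(\<Sum>a\<in>{1..<m}. T (tgt mu m a) nu) = mmul (Gop m) (T (mu - {#m#})) nu" .
  qed
  then show ?thesis using Gsum[OF assms] by simp
qed

definition Parts :: "nat \<Rightarrow> nat \<Rightarrow> nat multiset set" where
  "Parts n s = {c. is_partition c \<and> sum_mset c = n \<and> size c = s}"

lemma part_bound: "is_partition c \<Longrightarrow> set_mset c \<subseteq> {1..sum_mset c} \<and> size c \<le> sum_mset c"
proof (induction c)
  case empty then show ?case by simp
next
  case (add x c)
  then have "x \<ge> 1" "is_partition c" by (auto simp: is_partition_def)
  with add show ?case by auto
qed

lemma finite_allparts: "finite {c. is_partition c \<and> sum_mset c = n}"
proof -
  have "{c. is_partition c \<and> sum_mset c = n} \<subseteq> (\<Union>s\<le>n. multisets_of_size {1..n} s)"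
    using part_bound by (fastforce simp: multisets_of_size_def)
  moreover have "finite (\<Union>s\<le>n. multisets_of_size {1..n} s)" by auto
  ultimately show ?thesis by (rule finite_subset)
qed

lemma finite_Parts: "finite (Parts n s)"
  by (rule finite_subset[OF _ finite_allparts[of n]]) (auto simp: Parts_def)

lemma tgt_in:
  assumes "is_partition mu" "m \<in># mu" "a \<in> {1..<m}"
  shows "tgt mu m a \<in> Parts (sum_mset mu) (Suc (size mu))"
proof -
  obtain R where r: "mu = add_mset m R" using assms(2) by (metis multi_member_split)
  have "is_partition R" using assms(1) r by (auto simp: is_partition_def)
  then show ?thesis using assms(3) unfolding Parts_def tgt_def r is_partition_def by auto
qed

lemma sum_sum_mset_swap: "(\<Sum>c\<in>P. \<Sum>m\<in>#M. f m c) = (\<Sum>m\<in>#M. \<Sum>c\<in>P. f m c)"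
  by (induction M) (auto simp: sum.distrib)

lemma Q:
  assumes mu: "is_partition mu"
  shows "(\<Sum>c\<in>Parts (sum_mset mu) (Suc (size mu)). T mu c * T c nu) = (of_nat (size nu) - of_nat (size mu)) * T mu nu"
proof -
  let ?P = "Parts (sum_mset mu) (Suc (size mu))"
  have "(\<Sum>c\<in>?P. T mu c * T c nu) = (\<Sum>c\<in>?P. \<Sum>m\<in>#mu. \<Sum>a\<in>{1..<m}. mdelta (tgt mu m a) c * T c nu)"
    by (rule sum.cong) (auto simp: onestep[OF mu] Parts_def sum_distrib_right sum_mset_distrib_right)
  also have "\<dots> = (\<Sum>m\<in>#mu. \<Sum>a\<in>{1..<m}. \<Sum>c\<in>?P. mdelta (tgt mu m a) c * T c nu)"
    by (simp add: sum_sum_mset_swap sum.swap[of _ ?P])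
  also have "\<dots> = (\<Sum>m\<in>#mu. \<Sum>a\<in>{1..<m}. T (tgt mu m a) nu)"
  proof -
    have "image_mset (\<lambda>m. \<Sum>a\<in>{1..<m}. \<Sum>c\<in>?P. mdelta (tgt mu m a) c * T c nu) mu
        = image_mset (\<lambda>m. \<Sum>a\<in>{1..<m}. T (tgt mu m a) nu) mu"
    proof (rule image_mset_cong)
      fix m assume mm: "m \<in># mu"
      show "(\<Sum>a\<in>{1..<m}. \<Sum>c\<in>?P. mdelta (tgt mu m a) c * T c nu) = (\<Sum>a\<in>{1..<m}. T (tgt mu m a) nu)"
      proof (rule sum.cong[OF refl])
        fix a assume aa: "a \<in> {1..<m}"
        have "(\<Sum>c\<in>?P. mdelta (tgt mu m a) c * T c nu) = (\<Sum>c\<in>?P. if tgt mu m a = c then T c nu else 0)"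
          by (rule sum.cong) (auto simp: mdelta_def)
        also have "\<dots> = T (tgt mu m a) nu"
          using tgt_in[OF mu mm aa] finite_Parts by (simp add: sum.delta)
        finally show "(\<Sum>c\<in>?P. mdelta (tgt mu m a) c * T c nu) = T (tgt mu m a) nu" .
      qed
    qed
    then show ?thesis by simp
  qed
  also have "\<dots> = (of_nat (size nu) - of_nat (size mu)) * T mu nu" by (rule Nsum[OF mu])
  finally show ?thesis .
qed

definition Ch :: "nat \<Rightarrow> nat multiset \<Rightarrow> nat \<Rightarrow> nat multiset list set" where
  "Ch n mu j = {cs. length cs = j \<and>
              (\<forall>i<j. is_partition (cs ! i) \<and> sum_mset (cs ! i) = n \<and> size (cs ! i) = size mu + (i + 1))}"

lemma finite_Ch: "finite (Ch n mu j)"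
proof -
  have "Ch n mu j \<subseteq> {xs. set xs \<subseteq> {c. is_partition c \<and> sum_mset c = n} \<and> length xs = j}"
    unfolding Ch_def by (auto simp: in_set_conv_nth)
  moreover have "finite {xs. set xs \<subseteq> {c. is_partition c \<and> sum_mset c = n} \<and> length xs = j}"
    by (rule finite_lists_length_eq[OF finite_allparts])
  ultimately show ?thesis by (rule finite_subset)
qed

lemma Ch_Suc: "Ch n mu (Suc j) = (\<lambda>(c, cs). c # cs) ` (SIGMA c:Parts n (Suc (size mu)). Ch n c j)"
proof (rule set_eqI)
  fix xs
  show "xs \<in> Ch n mu (Suc j) \<longleftrightarrow> xs \<in> (\<lambda>(c, cs). c # cs) ` (SIGMA c:Parts n (Suc (size mu)). Ch n c j)"
  proof
    assume xs: "xs \<in> Ch n mu (Suc j)"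
    then obtain c cs where xcs: "xs = c # cs" unfolding Ch_def by (cases xs) auto
    have c: "c \<in> Parts n (Suc (size mu))" using xs unfolding xcs Ch_def Parts_def by (auto dest: spec[of _ 0])
    have "cs \<in> Ch n c j"
      unfolding Ch_def
    proof (intro CollectI conjI allI impI)
      show "length cs = j" using xs unfolding xcs Ch_def by simp
      fix i assume "i < j"
      then have "is_partition (xs ! Suc i) \<and> sum_mset (xs ! Suc i) = n \<and> size (xs ! Suc i) = size mu + (Suc i + 1)"
        using xs unfolding Ch_def by auto
      then show "is_partition (cs ! i)" "sum_mset (cs ! i) = n" "size (cs ! i) = size c + (i + 1)"
        using c unfolding xcs Parts_def by auto
    qed
    with c xcs show "xs \<in> (\<lambda>(c, cs). c # cs) ` (SIGMA c:Parts n (Suc (size mu)). Ch n c j)" by auto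
  next
    assume "xs \<in> (\<lambda>(c, cs). c # cs) ` (SIGMA c:Parts n (Suc (size mu)). Ch n c j)"
    then obtain c cs where xcs: "xs = c # cs" and c: "c \<in> Parts n (Suc (size mu))" and cs: "cs \<in> Ch n c j" by auto
    show "xs \<in> Ch n mu (Suc j)"
      unfolding Ch_def
    proof (intro CollectI conjI allI impI)
      show "length xs = Suc j" using cs unfolding xcs Ch_def by simp
      fix i assume i: "i < Suc j"
      have H: "is_partition (xs ! i) \<and> sum_mset (xs ! i) = n \<and> size (xs ! i) = size mu + (i + 1)"
      proof (cases i)
        case 0 then show ?thesis using c unfolding xcs Parts_def by simp
      next
        case (Suc i')
        then have "i' < j" using i by simp
        then show ?thesis using cs c unfolding xcs Suc Ch_def Parts_def by auto
      qed
      then show "is_partition (xs ! i)" "sum_mset (xs ! i) = n" "size (xs ! i) = size mu + (i + 1)" by auto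
    qed
  qed
qed

lemma chainT:
  assumes "is_partition mu" "sum_mset mu = n" "size nu = size mu + Suc j"
  shows "(\<Sum>cs\<in>Ch n mu j. \<Prod>i<Suc j. T ((mu # cs @ [nu]) ! i) ((mu # cs @ [nu]) ! (i + 1)))
         = of_nat (fact (Suc j)) * T mu nu"
  using assms
proof (induction j arbitrary: mu)
  case 0
  have "Ch n mu 0 = {[]}" unfolding Ch_def by auto
  then show ?case by simp
next
  case (Suc j)
  let ?f = "\<lambda>mu cs. \<Prod>i<Suc (Suc j). T ((mu # cs @ [nu]) ! i) ((mu # cs @ [nu]) ! (i + 1))"
  let ?P = "Parts n (Suc (size mu))"
  have inj: "inj_on (\<lambda>(c, cs). c # cs) (SIGMA c:?P. Ch n c j)" by (auto simp: inj_on_def)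
  have "(\<Sum>cs\<in>Ch n mu (Suc j). ?f mu cs) = (\<Sum>(c, cs)\<in>(SIGMA c:?P. Ch n c j). ?f mu (c # cs))"
    unfolding Ch_Suc sum.reindex[OF inj] by (simp add: comp_def case_prod_unfold)
  also have "\<dots> = (\<Sum>c\<in>?P. \<Sum>cs\<in>Ch n c j. ?f mu (c # cs))"
    by (rule sum.Sigma[symmetric]) (auto simp: finite_Parts finite_Ch)
  also have "\<dots> = (\<Sum>c\<in>?P. T mu c * (\<Sum>cs\<in>Ch n c j. \<Prod>i<Suc j. T ((c # cs @ [nu]) ! i) ((c # cs @ [nu]) ! (i + 1))))"
    by (simp add: prod.lessThan_Suc_shift sum_distrib_left del: prod.lessThan_Suc)
  also have "\<dots> = (\<Sum>c\<in>?P. T mu c * (of_nat (fact (Suc j)) * T c nu))"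
  proof (rule sum.cong[OF refl])
    fix c assume c: "c \<in> ?P"
    then have "is_partition c" "sum_mset c = n" "size nu = size c + Suc j"
      using Suc.prems unfolding Parts_def by auto
    then show "T mu c * (\<Sum>cs\<in>Ch n c j. \<Prod>i<Suc j. T ((c # cs @ [nu]) ! i) ((c # cs @ [nu]) ! (i + 1)))
        = T mu c * (of_nat (fact (Suc j)) * T c nu)"
      using Suc.IH by simp
  qed
  also have "\<dots> = of_nat (fact (Suc j)) * (\<Sum>c\<in>?P. T mu c * T c nu)"
    by (simp add: sum_distrib_left algebra_simps)
  also have "\<dots> = of_nat (fact (Suc j)) * ((of_nat (size nu) - of_nat (size mu)) * T mu nu)"
    using Q[OF Suc.prems(1)] Suc.prems(2) by simp
  also have "\<dots> = of_nat (fact (Suc (Suc j))) * T mu nu"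
    using Suc.prems(3) by (simp add: of_nat_diff algebra_simps)
  finally show ?case .
qed

lemma deriv_inv_pow:
  fixes g d :: complex and K :: complex
  assumes c: "g * w + d \<noteq> 0"
  shows "((\<lambda>w. K / (g * w + d) ^ (Suc n)) has_field_derivative (- K * of_nat (Suc n) * g / (g * w + d) ^ (Suc (Suc n)))) (at w)"
proof -
  define c where "c = g * w + d"
  have "((\<lambda>w. K * inverse (g * w + d) ^ (Suc n)) has_field_derivative (K * (of_nat (Suc n) * inverse c ^ n * (- (inverse c ^ 2) * g)))) (at w)"
    unfolding c_def using c
    by (intro derivative_eq_intros refl) (auto simp: power2_eq_square)
  moreover have "(K * (of_nat (Suc n) * inverse c ^ n * (- (inverse c ^ 2) * g))) = (- K * of_nat (Suc n) * g / (g * w + d) ^ (Suc (Suc n)))"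
    using c unfolding c_def[symmetric] by (simp add: field_simps power2_eq_square)
  moreover have "(\<lambda>w. K * inverse (g * w + d) ^ (Suc n)) = (\<lambda>w. K / (g * w + d) ^ (Suc n))"
    by (simp add: divide_inverse power_inverse)
  ultimately show ?thesis by (simp only:)
qed

lemma moeb_deriv1:
  assumes det: "\<alpha> * \<delta> - \<beta> * \<gamma> = 1" and c: "of_real \<gamma> * w + of_real \<delta> \<noteq> (0::complex)"
  shows "(moeb \<alpha> \<beta> \<gamma> \<delta> has_field_derivative 1 / (of_real \<gamma> * w + of_real \<delta>) ^ 2) (at w)"
proof -
  let ?A = "of_real \<alpha> :: complex" and ?B = "of_real \<beta> :: complex" and ?G = "of_real \<gamma> :: complex" and ?D = "of_real \<delta> :: complex"
  have d: "?A * ?D - ?B * ?G = 1"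
    by (metis det of_real_1 of_real_diff of_real_mult)
  have "((\<lambda>w. (?A * w + ?B) / (?G * w + ?D)) has_field_derivative
      ((?A * (?G * w + ?D) - (?A * w + ?B) * ?G) / ((?G * w + ?D) * (?G * w + ?D)))) (at w)"
    using c by (intro derivative_eq_intros refl) auto
  moreover have "(?A * (?G * w + ?D) - (?A * w + ?B) * ?G) = 1"
    using d by (simp add: algebra_simps)
  ultimately show ?thesis unfolding moeb_def by (simp add: power2_eq_square)
qed

lemma open_c: "open {w. of_real \<gamma> * w + of_real \<delta> \<noteq> (0::complex)}"
  by (rule open_Collect_neq) (intro continuous_intros)+

lemma moeb_higher:
  assumes det: "\<alpha> * \<delta> - \<beta> * \<gamma> = 1"
  shows "of_real \<gamma> * w + of_real \<delta> \<noteq> (0::complex) \<Longrightarrow>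
    (deriv ^^ Suc j) (moeb \<alpha> \<beta> \<gamma> \<delta>) w = of_nat (fact (Suc j)) * (- of_real \<gamma>) ^ j / (of_real \<gamma> * w + of_real \<delta>) ^ Suc (Suc j)"
proof (induction j arbitrary: w)
  case 0
  then show ?case using DERIV_imp_deriv[OF moeb_deriv1[OF det]] by (simp add: power2_eq_square)
next
  case (Suc j)
  let ?S = "{w. of_real \<gamma> * w + of_real \<delta> \<noteq> (0::complex)}"
  let ?K = "of_nat (fact (Suc j)) * (- of_real \<gamma>) ^ j :: complex"
  have ev: "\<forall>\<^sub>F x in nhds w. (deriv ^^ Suc j) (moeb \<alpha> \<beta> \<gamma> \<delta>) x = ?K / (of_real \<gamma> * x + of_real \<delta>) ^ Suc (Suc j)"
  proof -
    have "\<forall>\<^sub>F x in nhds w. x \<in> ?S" using Suc.prems by (intro eventually_nhds_in_open open_c) auto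
    then show ?thesis by eventually_elim (use Suc.IH in auto)
  qed
  have "(deriv ^^ Suc (Suc j)) (moeb \<alpha> \<beta> \<gamma> \<delta>) w = deriv ((deriv ^^ Suc j) (moeb \<alpha> \<beta> \<gamma> \<delta>)) w"
    by simp
  also have "\<dots> = deriv (\<lambda>x. ?K / (of_real \<gamma> * x + of_real \<delta>) ^ Suc (Suc j)) w"
    by (rule deriv_cong_ev[OF ev refl])
  also have "\<dots> = - ?K * of_nat (Suc (Suc j)) * of_real \<gamma> / (of_real \<gamma> * w + of_real \<delta>) ^ Suc (Suc (Suc j))"
    by (rule DERIV_imp_deriv[OF deriv_inv_pow]) (use Suc.prems in simp)
  also have "\<dots> = of_nat (fact (Suc (Suc j))) * (- of_real \<gamma>) ^ Suc j / (of_real \<gamma> * w + of_real \<delta>) ^ Suc (Suc (Suc j))"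
    by (simp add: algebra_simps)
  finally show ?case .
qed

lemma zcoef_formula:
  assumes det: "\<alpha> * \<delta> - \<beta> * \<gamma> = 1" and c: "of_real \<gamma> * tau + of_real \<delta> \<noteq> (0::complex)" and m: "m \<ge> 1"
  shows "zcoef (moeb \<alpha> \<beta> \<gamma> \<delta>) tau m nu =
    W m nu * (- of_real \<gamma> / (of_real \<gamma> * tau + of_real \<delta>)) ^ (size nu - 1) / (of_real \<gamma> * tau + of_real \<delta>) ^ 2"
proof (cases "sum_mset nu = m")
  case False then show ?thesis by (simp add: zcoef_def W_def)
next
  case True
  define C where "C = (of_real \<gamma> * tau + of_real \<delta> :: complex)"
  define p where "p = size nu"
  show ?thesis
  proof (cases "mpow Xpoly p nu = 0")
    case z: True
    have "mpow Xpoly i nu = 0" for i using z mpowX_supp unfolding p_def by metis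
    then have "zcoef (moeb \<alpha> \<beta> \<gamma> \<delta>) tau m nu = 0"
      unfolding zcoef_def by simp
    moreover have "W m nu = 0" using True z unfolding W_def p_def by simp
    ultimately show ?thesis by simp
  next
    case nz: False
    from mpowX_supp[OF nz] have n0: "0 \<notin># nu" by simp
    then have "nu \<noteq> {#}" using True m by auto
    then have p1: "p \<ge> 1" unfolding p_def by (simp add: Suc_leI nonempty_has_size)
    have pm: "p \<le> m" using part_bound[of nu] n0 True unfolding p_def is_partition_def by simp
    obtain j where pj: "p = Suc j" using p1 by (cases p) auto
    have X0: "i \<noteq> p \<Longrightarrow> mpow Xpoly i nu = 0" for i using mpowX_supp unfolding p_def by metis
    have "zcoef (moeb \<alpha> \<beta> \<gamma> \<delta>) tau m nu =
        (\<Sum>i\<le>m. (deriv ^^ i) (moeb \<alpha> \<beta> \<gamma> \<delta>) tau / of_nat (fact i) * mpow Xpoly i nu)"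
      unfolding zcoef_def using True by simp
    also have "\<dots> = (\<Sum>i\<le>m. if i = p then (deriv ^^ p) (moeb \<alpha> \<beta> \<gamma> \<delta>) tau / of_nat (fact p) * mpow Xpoly p nu else 0)"
      by (intro sum.cong refl) (simp add: X0)
    also have "\<dots> = (deriv ^^ p) (moeb \<alpha> \<beta> \<gamma> \<delta>) tau / of_nat (fact p) * mpow Xpoly p nu"
      using pm by simp
    also have "\<dots> = (- of_real \<gamma>) ^ j / C ^ Suc (Suc j) * mpow Xpoly p nu"
      unfolding pj moeb_higher[OF det c] C_def by (simp del: fact_Suc)
    also have "\<dots> = W m nu * (- of_real \<gamma> / C) ^ (size nu - 1) / C ^ 2"
    proof -
      have Cn: "C \<noteq> 0" using c unfolding C_def .
      have e: "C ^ j * (- (of_real \<gamma> / C)) ^ j = (- of_real \<gamma>) ^ j"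
        using Cn by (simp add: power_mult_distrib[symmetric])
      show ?thesis
        using True Cn e unfolding W_def p_def[symmetric] pj
        by (simp add: field_simps power2_eq_square)
    qed
    finally show ?thesis unfolding C_def .
  qed
qed

lemma mmul_weight:
  assumes F: "\<And>b. F b \<noteq> 0 \<Longrightarrow> size b \<ge> p" and G: "\<And>b. G b \<noteq> 0 \<Longrightarrow> size b \<ge> q"
  shows "mmul (\<lambda>b. F b * r ^ (size b - p) * x) (\<lambda>b. G b * r ^ (size b - q) * y) nu
       = mmul F G nu * r ^ (size nu - (p + q)) * (x * y)"
  unfolding mmul_def sum_distrib_right
proof (rule sum.cong[OF refl])
  fix b assume b: "b \<in> {b. b \<subseteq># nu}"
  show "F b * r ^ (size b - p) * x * (G (nu - b) * r ^ (size (nu - b) - q) * y) =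
        F b * G (nu - b) * r ^ (size nu - (p + q)) * (x * y)"
  proof (cases "F b = 0 \<or> G (nu - b) = 0")
    case True then show ?thesis by auto
  next
    case False
    then have "size b \<ge> p" "size (nu - b) \<ge> q" using F G by auto
    moreover have "size nu = size b + size (nu - b)" using size_sub[of b nu] b by simp
    ultimately have "size nu - (p + q) = (size b - p) + (size (nu - b) - q)" by simp
    then show ?thesis by (simp add: power_add algebra_simps)
  qed
qed

definition FW :: "nat list \<Rightarrow> nat multiset \<Rightarrow> complex" where
  "FW ms = foldr (\<lambda>m acc. mmul (W m) acc) ms mone"

lemma FW_supp: "(\<forall>m\<in>set ms. m \<ge> 1) \<Longrightarrow> FW ms nu \<noteq> 0 \<Longrightarrow> size nu \<ge> length ms"
proof (induction ms arbitrary: nu)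
  case Nil then show ?case by simp
next
  case (Cons m ms)
  from Cons.prems(2) obtain b where b: "b \<subseteq># nu" "W m b \<noteq> 0" "FW ms (nu - b) \<noteq> 0"
    unfolding FW_def using mmul_nonzero by fastforce
  have "size b \<ge> 1" using W_supp[OF b(2)] Cons.prems(1) by auto
  moreover have "size (nu - b) \<ge> length ms" using Cons.IH[OF _ b(3)] Cons.prems(1) by auto
  ultimately show ?case using size_sub[OF b(1)] by auto
qed

lemma FZ_formula:
  assumes det: "\<alpha> * \<delta> - \<beta> * \<gamma> = 1" and c: "of_real \<gamma> * tau + of_real \<delta> \<noteq> (0::complex)"
  shows "(\<forall>m\<in>set ms. m \<ge> 1) \<Longrightarrow>
    foldr (\<lambda>m acc. mmul (zcoef (moeb \<alpha> \<beta> \<gamma> \<delta>) tau m) acc) ms mone nu =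
    FW ms nu * (- of_real \<gamma> / (of_real \<gamma> * tau + of_real \<delta>)) ^ (size nu - length ms)
      * (1 / (of_real \<gamma> * tau + of_real \<delta>) ^ 2) ^ length ms"
proof (induction ms arbitrary: nu)
  case Nil then show ?case by (simp add: FW_def mone_def)
next
  case (Cons m ms)
  let ?r = "- of_real \<gamma> / (of_real \<gamma> * tau + of_real \<delta>) :: complex"
  let ?x = "1 / (of_real \<gamma> * tau + of_real \<delta>) ^ 2 :: complex"
  have m: "m \<ge> 1" and ms: "\<forall>m\<in>set ms. m \<ge> 1" using Cons.prems by auto
  have Z: "zcoef (moeb \<alpha> \<beta> \<gamma> \<delta>) tau m = (\<lambda>b. W m b * ?r ^ (size b - 1) * ?x)"
    using zcoef_formula[OF det c m] by (simp add: fun_eq_iff)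
  have R: "foldr (\<lambda>m acc. mmul (zcoef (moeb \<alpha> \<beta> \<gamma> \<delta>) tau m) acc) ms mone =
      (\<lambda>b. FW ms b * ?r ^ (size b - length ms) * ?x ^ length ms)"
    using Cons.IH[OF ms] by (simp add: fun_eq_iff)
  have "foldr (\<lambda>m acc. mmul (zcoef (moeb \<alpha> \<beta> \<gamma> \<delta>) tau m) acc) (m # ms) mone nu
      = mmul (\<lambda>b. W m b * ?r ^ (size b - 1) * ?x) (\<lambda>b. FW ms b * ?r ^ (size b - length ms) * ?x ^ length ms) nu"
    by (simp add: Z R)
  also have "\<dots> = mmul (W m) (FW ms) nu * ?r ^ (size nu - (1 + length ms)) * (?x * ?x ^ length ms)"
    by (rule mmul_weight) (use W_supp m FW_supp[OF ms] in auto)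
  also have "\<dots> = FW (m # ms) nu * ?r ^ (size nu - length (m # ms)) * ?x ^ length (m # ms)"
    by (simp add: FW_def)
  finally show ?case .
qed

lemma pi_formula:
  assumes det: "\<alpha> * \<delta> - \<beta> * \<gamma> = 1" and c: "of_real \<gamma> * tau + of_real \<delta> \<noteq> (0::complex)"
    and mu: "is_partition mu"
  shows "pi_bmu \<alpha> \<beta> \<gamma> \<delta> tau mu nu =
    T mu nu * (- of_real \<gamma> / (of_real \<gamma> * tau + of_real \<delta>)) ^ (size nu - size mu)
      * (1 / (of_real \<gamma> * tau + of_real \<delta>) ^ 2) ^ size mu"
proof -
  have "\<forall>m\<in>set (sorted_list_of_multiset mu). m \<ge> 1"
  proof
    fix m assume "m \<in> set (sorted_list_of_multiset mu)"
    then have "m \<in># mu" by simp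
    with mu show "m \<ge> 1" by (cases m) (auto simp: is_partition_def)
  qed
  moreover have "length (sorted_list_of_multiset mu) = size mu"
    by (metis mset_sorted_list_of_multiset size_mset)
  ultimately show ?thesis using FZ_formula[OF det c, of "sorted_list_of_multiset mu" nu]
    unfolding pi_bmu_def T_def FW_def by simp
qed

lemma c_nonzero:
  assumes det: "\<alpha> * \<delta> - \<beta> * \<gamma> = 1" and tau: "tau \<in> upper_half_plane"
  shows "of_real \<gamma> * tau + of_real \<delta> \<noteq> (0::complex)"
proof (cases "\<gamma> = 0")
  case True
  then have "\<delta> \<noteq> 0" using det by auto
  then show ?thesis using True by simp
next
  case False
  have "Im (of_real \<gamma> * tau + of_real \<delta>) = \<gamma> * Im tau" by simp
  moreover have "Im tau > 0" using tau unfolding upper_half_plane_def by simp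
  ultimately have nz: "\<gamma> * Im tau \<noteq> 0" using False by simp
  show ?thesis
  proof
    assume h: "of_real \<gamma> * tau + of_real \<delta> = (0::complex)"
    have "\<gamma> * Im tau = Im (of_real \<gamma> * tau + of_real \<delta>)" by simp
    also have "\<dots> = 0" unfolding h by simp
    finally show False using nz by simp
  qed
qed

lemma t_rep_T:
  assumes mu: "is_partition mu"
  shows "t_rep mu (T mu)"
  unfolding t_rep_def
proof (intro conjI allI impI)
  fix nu assume "\<not> t_admissible mu nu"
  then show "T mu nu = 0" using T_supp[OF mu] unfolding t_admissible_def by auto
next
  fix \<alpha> \<beta> \<gamma> \<delta> :: real and tau nu
  assume det: "\<alpha> * \<delta> - \<beta> * \<gamma> = 1" and tau: "tau \<in> upper_half_plane"
  have c: "of_real \<gamma> * tau + of_real \<delta> \<noteq> (0::complex)" by (rule c_nonzero[OF det tau])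
  define C where "C = (of_real \<gamma> * tau + of_real \<delta> :: complex)"
  have Cn: "C \<noteq> 0" using c unfolding C_def .
  show "pi_bmu \<alpha> \<beta> \<gamma> \<delta> tau mu nu =
      (if t_admissible mu nu
       then T mu nu * (- of_real \<gamma>) ^ (size nu - size mu) / (of_real \<gamma> * tau + of_real \<delta>) ^ (size mu + size nu)
       else 0)"
  proof (cases "t_admissible mu nu")
    case True
    then obtain d where d: "size nu = size mu + d" unfolding t_admissible_def using le_Suc_ex by blast
    have p1: "(- of_real \<gamma> / C) ^ d = (- of_real \<gamma>) ^ d / C ^ d" by (rule power_divide)
    have p2: "(1 / C ^ 2) ^ size mu = 1 / C ^ (2 * size mu)" by (simp add: power_one_over power_mult)
    have "size mu + (size mu + d) = d + 2 * size mu" by simp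
    then have p3: "C ^ (size mu + (size mu + d)) = C ^ d * C ^ (2 * size mu)" by (simp only: power_add)
    have "(- of_real \<gamma> / C) ^ d * (1 / C ^ 2) ^ size mu = (- of_real \<gamma>) ^ d / C ^ (size mu + (size mu + d))"
      unfolding p1 p2 p3 by simp
    then show ?thesis using True unfolding pi_formula[OF det c mu] C_def[symmetric] d by (simp add: mult.assoc)
  next
    case False
    then have "T mu nu = 0" using T_supp[OF mu] unfolding t_admissible_def by auto
    then show ?thesis using False unfolding pi_formula[OF det c mu] by simp
  qed
qed

lemma t_rep_unique:
  assumes mu: "is_partition mu" and t: "t_rep mu t"
  shows "t = T mu"
proof
  fix nu
  show "t nu = T mu nu"
  proof (cases "t_admissible mu nu")
    case False
    then show ?thesis using t T_supp[OF mu] unfolding t_rep_def t_admissible_def by auto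
  next
    case True
    have det: "(1::real) * 1 - 0 * (-1) = 1" by simp
    have tau: "\<i> \<in> upper_half_plane" unfolding upper_half_plane_def by simp
    define C where "C = (of_real (-1) * \<i> + of_real 1 :: complex)"
    have Cn: "C \<noteq> 0" unfolding C_def by (simp add: complex_eq_iff)
    have e1: "pi_bmu 1 0 (-1) 1 \<i> mu nu = t nu * (- of_real (-1)) ^ (size nu - size mu) / C ^ (size mu + size nu)"
      using t det tau True unfolding t_rep_def C_def by (metis (no_types, lifting))
    have e2: "pi_bmu 1 0 (-1) 1 \<i> mu nu = T mu nu * (- of_real (-1)) ^ (size nu - size mu) / C ^ (size mu + size nu)"
      using t_rep_T[OF mu] det tau True unfolding t_rep_def C_def by (metis (no_types, lifting))
    from e1 e2 Cn show ?thesis by simp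
  qed
qed

lemma tcoef_T: "is_partition mu \<Longrightarrow> tcoef mu = T mu"
  unfolding tcoef_def using t_rep_T t_rep_unique by (metis the_equality)

theorem lemma6p2:
  fixes mu nu :: "nat multiset" and n k :: nat
  assumes "is_partition mu" and "sum_mset mu = n"
    and "is_partition nu" and "sum_mset nu = n"
    and "size nu = size mu + k" and "k \<ge> 2"
  shows "(\<Sum>cs\<in>{cs. length cs = k - 1 \<and>
              (\<forall>i<k - 1. is_partition (cs ! i) \<and> sum_mset (cs ! i) = n \<and>
                          size (cs ! i) = size mu + (i + 1))}.
            (\<Prod>i<k. tcoef ((mu # cs @ [nu]) ! i) ((mu # cs @ [nu]) ! (i + 1))))
         = of_nat (fact k) * tcoef mu nu"
proof -
  obtain j where kj: "k = Suc j" using assms(6) by (cases k) auto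
  have S: "{cs. length cs = k - 1 \<and>
              (\<forall>i<k - 1. is_partition (cs ! i) \<and> sum_mset (cs ! i) = n \<and>
                          size (cs ! i) = size mu + (i + 1))} = Ch n mu j"
    unfolding Ch_def kj by simp
  have "(\<Sum>cs\<in>Ch n mu j. \<Prod>i<k. tcoef ((mu # cs @ [nu]) ! i) ((mu # cs @ [nu]) ! (i + 1)))
      = (\<Sum>cs\<in>Ch n mu j. \<Prod>i<Suc j. T ((mu # cs @ [nu]) ! i) ((mu # cs @ [nu]) ! (i + 1)))"
  proof (rule sum.cong[OF refl])
    fix cs assume cs: "cs \<in> Ch n mu j"
    show "(\<Prod>i<k. tcoef ((mu # cs @ [nu]) ! i) ((mu # cs @ [nu]) ! (i + 1)))
        = (\<Prod>i<Suc j. T ((mu # cs @ [nu]) ! i) ((mu # cs @ [nu]) ! (i + 1)))"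
      unfolding kj
    proof (rule prod.cong[OF refl])
      fix i assume i: "i \<in> {..<Suc j}"
      have "is_partition ((mu # cs @ [nu]) ! i)"
      proof (cases i)
        case 0 then show ?thesis using assms(1) by simp
      next
        case (Suc i')
        then have "i' < j" "length cs = j" using i cs unfolding Ch_def by auto
        then show ?thesis using cs unfolding Suc Ch_def by (auto simp: nth_append)
      qed
      then show "tcoef ((mu # cs @ [nu]) ! i) ((mu # cs @ [nu]) ! (i + 1)) = T ((mu # cs @ [nu]) ! i) ((mu # cs @ [nu]) ! (i + 1))"
        by (simp add: tcoef_T)
    qed
  qed
  also have "\<dots> = of_nat (fact (Suc j)) * T mu nu"
    by (rule chainT) (use assms kj in auto)
  finally show ?thesis unfolding S using tcoef_T[OF assms(1)] kj by (simp del: fact_Suc)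
qed

end
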